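(* Let $Y$ be a real-valued random variable (representing the conditional distribution of the potential reward $R(a,x)$ given $A=a$, $X=x$) with finite second moment, and let $\alpha\ge 0$. Consider the problem $$\min_{D}\ \mathbb{E}\big[Y\,D(Y)\big]$$ over measurable functions $D:\mathbb{R}\to\mathbb{R}$ subject to (i) $D(r)\ge 0$ for all $r$, (ii) $\mathbb{E}[D(Y)]=1$, and (iii) $D(r_1)\le e^{2\alpha} D(r_2)$ for all $r_1,r_2$. Then the optimal value of this problem equals $\lambda^*$, where $\lambda^*$ is a minimizer over $\lambda\in\mathbb{R}$ of $$\mathbb{E}\big[\ell_\alpha(Y,\lambda)\big],\qquad \ell_\alpha(y,\lambda)=\{y-\lambda\}_+^2+e^{2\alpha}\{y-\lambda\}_-^2 ,$$ where $\{t\}_+=\max(t,0)$ and $\{t\}_-=\max(-t,0)$. Equivalently, with conditioning on $A=a$, $X=x$, the value $\min_D \mathbb{E}[R(a,x)D(R(a,x))\mid A=a,X=x]$ equals $f^*_{a,a'}(x)$, where $f^*_{a,a'}$ minimizes $\mathbb{E}[\ell_\alpha(R(a,x),f_{a,a'}(x))\mid A=a,X=x]$ over functions $f_{a,a'}$.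
   Context: In the paper, $D$ plays the role of the Radon–Nikodym ratio $D(r,x,a,a')=\mathrm{d}P_{R(a,x)\mid A=a',X=x}/\mathrm{d}P_{R(a,x)\mid A=a,X=x}(r)$ between conditional laws of the potential reward under a perturbed logging policy, and the constrained minimum gives a lower bound on $\mathbb{E}[R(a,x)\mid A=a',X=x]$ under uncertainty level $\alpha$. *)

theory Defs
  imports "HOL-Probability.Probability"
begin

definition pos_part :: "real \<Rightarrow> real" where
  "pos_part t = max t 0"

definition neg_part :: "real \<Rightarrow> real" where
  "neg_part t = max (- t) 0"

definition ell_alpha :: "real \<Rightarrow> real \<Rightarrow> real \<Rightarrow> real" where
  "ell_alpha \<alpha> y lam = (pos_part (y - lam))\<^sup>2 + exp (2 * \<alpha>) * (neg_part (y - lam))\<^sup>2"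

definition feasible_D :: "'a measure \<Rightarrow> ('a \<Rightarrow> real) \<Rightarrow> real \<Rightarrow> (real \<Rightarrow> real) \<Rightarrow> bool" where
  "feasible_D M Y \<alpha> D \<longleftrightarrow>
     D \<in> borel_measurable borel \<and>
     (\<forall>r. D r \<ge> 0) \<and>
     (\<integral>\<omega>. D (Y \<omega>) \<partial>M) = 1 \<and>
     (\<forall>r1 r2. D r1 \<le> exp (2 * \<alpha>) * D r2)"

end

theory Submission
  imports Defs
begin

definition phi_c :: "real \<Rightarrow> real \<Rightarrow> real" where
  "phi_c c t = pos_part t - c * neg_part t"

lemma q_pointwise:
  fixes c t h :: real
  assumes c1: "c \<ge> 1"
  shows "(pos_part (t - h))\<^sup>2 + c * (neg_part (t - h))\<^sup>2
     \<le> (pos_part t)\<^sup>2 + c * (neg_part t)\<^sup>2 - 2 * h * (pos_part t - c * neg_part t) + c * h\<^sup>2"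
proof (cases "t \<ge> 0")
  case True
  then have pt: "pos_part t = t" "neg_part t = 0" by (auto simp: pos_part_def neg_part_def)
  show ?thesis
  proof (cases "t - h \<ge> 0")
    case True
    then have ps: "pos_part (t-h) = t - h" "neg_part (t-h) = 0" by (auto simp: pos_part_def neg_part_def)
    have "h\<^sup>2 \<le> c * h\<^sup>2" using mult_right_mono[OF c1, of "h\<^sup>2"] by simp
    moreover have "(t-h)\<^sup>2 = t\<^sup>2 - 2*h*t + h\<^sup>2" by (simp add: power2_diff algebra_simps)
    ultimately show ?thesis unfolding pt ps by simp
  next
    case False
    then have ps: "pos_part (t-h) = 0" "neg_part (t-h) = h - t" by (auto simp: pos_part_def neg_part_def)
    have "(c - 1) * (t * (2*h - t)) \<ge> 0"
      using c1 \<open>t \<ge> 0\<close> False by simp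
    moreover have "(t\<^sup>2 - 2*h*t + c*h\<^sup>2) - c * (h-t)\<^sup>2 = (c - 1) * (t * (2*h - t))"
      by (simp add: power2_eq_square algebra_simps)
    ultimately show ?thesis unfolding pt ps by simp
  qed
next
  case False
  then have pt: "pos_part t = 0" "neg_part t = - t" by (auto simp: pos_part_def neg_part_def)
  have eq: "c * t\<^sup>2 - 2 * h * (c * t) + c * h\<^sup>2 = c * (h - t)\<^sup>2"
    by (simp add: power2_eq_square algebra_simps)
  show ?thesis
  proof (cases "t - h \<ge> 0")
    case True
    then have ps: "pos_part (t-h) = t - h" "neg_part (t-h) = 0" by (auto simp: pos_part_def neg_part_def)
    have "(t-h)\<^sup>2 \<le> c * (t-h)\<^sup>2" using mult_right_mono[OF c1, of "(t-h)\<^sup>2"] by simp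
    moreover have "(t-h)\<^sup>2 = (h-t)\<^sup>2" by (simp add: power2_commute)
    ultimately show ?thesis unfolding pt ps using eq by simp
  next
    case f2: False
    then have ps: "pos_part (t-h) = 0" "neg_part (t-h) = h - t" by (auto simp: pos_part_def neg_part_def)
    show ?thesis unfolding pt ps using eq by simp
  qed
qed

lemma ell_pointwise:
  assumes c: "c = exp (2 * \<alpha>)" and a: "\<alpha> \<ge> 0"
  shows "ell_alpha \<alpha> y (l + h) \<le> ell_alpha \<alpha> y l - 2 * h * phi_c c (y - l) + c * h\<^sup>2"
proof -
  have c1: "c \<ge> 1" using c a by simp
  have e: "y - (l + h) = (y - l) - h" by simp
  show ?thesis
    unfolding ell_alpha_def phi_c_def e c[symmetric] using q_pointwise[OF c1] by simp
qed


lemma pos_neg_sq: "(pos_part t)\<^sup>2 + (neg_part t)\<^sup>2 = t\<^sup>2"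
  by (cases "t \<ge> 0") (auto simp: pos_part_def neg_part_def)

lemma pos_part_nn: "pos_part t \<ge> 0" and neg_part_nn: "neg_part t \<ge> 0"
  by (auto simp: pos_part_def neg_part_def)

lemma ell_bound:
  assumes "\<alpha> \<ge> 0"
  shows "\<bar>ell_alpha \<alpha> y l\<bar> \<le> exp (2*\<alpha>) * (2 * y\<^sup>2 + 2 * l\<^sup>2)"
proof -
  define c where "c = exp (2*\<alpha>)"
  have c1: "c \<ge> 1" using assms by (simp add: c_def)
  have nn: "0 \<le> ell_alpha \<alpha> y l" unfolding ell_alpha_def by simp
  have "ell_alpha \<alpha> y l \<le> c * (pos_part (y - l))\<^sup>2 + c * (neg_part (y-l))\<^sup>2"
    unfolding ell_alpha_def c_def[symmetric]
    using mult_right_mono[OF c1, of "(pos_part (y - l))\<^sup>2"] by simp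
  also have "\<dots> = c * (y - l)\<^sup>2" by (simp only: distrib_left[symmetric] pos_neg_sq)
  also have "\<dots> \<le> c * (2 * y\<^sup>2 + 2 * l\<^sup>2)"
  proof -
    have "(y - l)\<^sup>2 \<le> 2 * y\<^sup>2 + 2 * l\<^sup>2"
      using zero_le_power2[of "y + l"] by (simp add: power2_eq_square algebra_simps)
    then show ?thesis using c1 by simp
  qed
  finally show ?thesis using nn by (simp add: c_def)
qed

lemma phi_bound:
  assumes "c \<ge> 1"
  shows "\<bar>phi_c c t\<bar> \<le> c * \<bar>t\<bar>"
proof (cases "t \<ge> 0")
  case True
  then show ?thesis using mult_right_mono[OF assms True] by (simp add: phi_c_def pos_part_def neg_part_def)
next
  case False
  then show ?thesis using assms by (simp add: phi_c_def pos_part_def neg_part_def abs_mult)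
qed

lemma pos_part_meas[measurable]: "pos_part \<in> borel_measurable borel"
  unfolding pos_part_def[abs_def] by measurable

lemma neg_part_meas[measurable]: "neg_part \<in> borel_measurable borel"
  unfolding neg_part_def[abs_def] by measurable

theorem lemma2:
  fixes M :: "'a measure" and Y :: "'a \<Rightarrow> real" and \<alpha> lam_star :: real
  assumes "prob_space M"
    and "Y \<in> borel_measurable M"
    and "integrable M (\<lambda>\<omega>. (Y \<omega>)\<^sup>2)"
    and "\<alpha> \<ge> 0"
    and "\<forall>lam. (\<integral>\<omega>. ell_alpha \<alpha> (Y \<omega>) lam_star \<partial>M) \<le> (\<integral>\<omega>. ell_alpha \<alpha> (Y \<omega>) lam \<partial>M)"
  shows "(\<exists>D. feasible_D M Y \<alpha> D \<and> (\<integral>\<omega>. Y \<omega> * D (Y \<omega>) \<partial>M) = lam_star)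
         \<and> (\<forall>D. feasible_D M Y \<alpha> D \<longrightarrow> (\<integral>\<omega>. Y \<omega> * D (Y \<omega>) \<partial>M) \<ge> lam_star)"
proof -
  interpret P: prob_space M by fact
  define c where "c = exp (2*\<alpha>)"
  have c1: "c \<ge> 1" using assms(4) by (simp add: c_def)
  have Ym[measurable]: "Y \<in> borel_measurable M" by fact
  have Y2i: "integrable M (\<lambda>\<omega>. (Y \<omega>)\<^sup>2)" by fact
  have Yi: "integrable M Y" by (rule P.square_integrable_imp_integrable[OF Ym Y2i])
  have elli: "integrable M (\<lambda>\<omega>. ell_alpha \<alpha> (Y \<omega>) l)" for l
  proof (rule Bochner_Integration.integrable_bound)
    show "integrable M (\<lambda>\<omega>. exp (2*\<alpha>) * (2 * (Y \<omega>)\<^sup>2 + 2 * l\<^sup>2))"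
      using Y2i by auto
    show "(\<lambda>\<omega>. ell_alpha \<alpha> (Y \<omega>) l) \<in> borel_measurable M"
      unfolding ell_alpha_def by measurable
    show "AE \<omega> in M. norm (ell_alpha \<alpha> (Y \<omega>) l) \<le> norm (exp (2*\<alpha>) * (2 * (Y \<omega>)\<^sup>2 + 2 * l\<^sup>2))"
      using ell_bound[OF assms(4)] by (auto intro: order_trans)
  qed
  have phii: "integrable M (\<lambda>\<omega>. phi_c c (Y \<omega> - l))" for l
  proof (rule Bochner_Integration.integrable_bound)
    show "integrable M (\<lambda>\<omega>. c * (\<bar>Y \<omega>\<bar> + \<bar>l\<bar>))"
      using Yi by auto
    show "(\<lambda>\<omega>. phi_c c (Y \<omega> - l)) \<in> borel_measurable M"
      unfolding phi_c_def by measurable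
    show "AE \<omega> in M. norm (phi_c c (Y \<omega> - l)) \<le> norm (c * (\<bar>Y \<omega>\<bar> + \<bar>l\<bar>))"
    proof (rule AE_I2)
      fix \<omega>
      have "\<bar>phi_c c (Y \<omega> - l)\<bar> \<le> c * \<bar>Y \<omega> - l\<bar>" by (rule phi_bound[OF c1])
      also have "\<dots> \<le> c * (\<bar>Y \<omega>\<bar> + \<bar>l\<bar>)" using c1 by (intro mult_left_mono) auto
      finally show "norm (phi_c c (Y \<omega> - l)) \<le> norm (c * (\<bar>Y \<omega>\<bar> + \<bar>l\<bar>))" using c1 by simp
    qed
  qed
  define g where "g = (\<integral>\<omega>. phi_c c (Y \<omega> - lam_star) \<partial>M)"
  have step: "0 \<le> - 2 * h * g + c * h\<^sup>2" for h
  proof -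
    have "(\<integral>\<omega>. ell_alpha \<alpha> (Y \<omega>) (lam_star + h) \<partial>M)
       \<le> (\<integral>\<omega>. ell_alpha \<alpha> (Y \<omega>) lam_star - 2 * h * phi_c c (Y \<omega> - lam_star) + c * h\<^sup>2 \<partial>M)"
      by (rule integral_mono) (auto intro!: elli phii ell_pointwise[OF c_def assms(4)] Bochner_Integration.integrable_add Bochner_Integration.integrable_diff integrable_mult_right)
    also have "\<dots> = (\<integral>\<omega>. ell_alpha \<alpha> (Y \<omega>) lam_star \<partial>M) - 2 * h * g + c * h\<^sup>2"
      using elli phii by (simp add: g_def P.prob_space)
    finally show ?thesis using spec[OF assms(5), of "lam_star + h"] by linarith
  qed
  have g0: "g = 0"
  proof -
    have "0 \<le> - 2 * (g / c) * g + c * (g / c)\<^sup>2" by (rule step)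
    also have "\<dots> = - (g\<^sup>2 / c)" using c1 by (simp add: power2_eq_square field_simps)
    finally have "g\<^sup>2 \<le> 0" using c1 by (simp add: divide_le_0_iff)
    then show ?thesis by simp
  qed
  define w where "w = (\<lambda>y::real. if lam_star \<le> y then 1 else c)"
  have w_meas[measurable]: "w \<in> borel_measurable borel" unfolding w_def by measurable
  have w_ge: "w y \<ge> 1" for y using c1 by (simp add: w_def)
  have w_le: "w y \<le> c" for y using c1 by (simp add: w_def)
  have phi_w: "phi_c c (y - lam_star) = (y - lam_star) * w y" for y
    by (simp add: w_def phi_c_def pos_part_def neg_part_def algebra_simps)
  have wi: "integrable M (\<lambda>\<omega>. w (Y \<omega>))"
  proof (rule Bochner_Integration.integrable_bound)
    show "integrable M (\<lambda>\<omega>. c)" by simp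
    show "(\<lambda>\<omega>. w (Y \<omega>)) \<in> borel_measurable M" by measurable
    show "AE \<omega> in M. norm (w (Y \<omega>)) \<le> norm c"
      using w_le w_ge c1 by (auto intro!: AE_I2 order_trans[OF _ w_le] simp: abs_of_nonneg order_trans[OF zero_le_one])
  qed
  have Ywi: "integrable M (\<lambda>\<omega>. Y \<omega> * w (Y \<omega>))"
  proof (rule Bochner_Integration.integrable_bound)
    show "integrable M (\<lambda>\<omega>. c * Y \<omega>)" using Yi by simp
    show "(\<lambda>\<omega>. Y \<omega> * w (Y \<omega>)) \<in> borel_measurable M" by measurable
    show "AE \<omega> in M. norm (Y \<omega> * w (Y \<omega>)) \<le> norm (c * Y \<omega>)"
    proof (rule AE_I2)
      fix \<omega>
      have "\<bar>w (Y \<omega>)\<bar> \<le> \<bar>c\<bar>" using w_le w_ge c1 by (smt (verit))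
      then show "norm (Y \<omega> * w (Y \<omega>)) \<le> norm (c * Y \<omega>)"
        by (simp add: abs_mult) (metis abs_ge_zero mult.commute mult_left_mono)
    qed
  qed
  define E where "E = (\<integral>\<omega>. w (Y \<omega>) \<partial>M)"
  have E1: "E \<ge> 1"
  proof -
    have "(\<integral>\<omega>. 1 \<partial>M) \<le> E" unfolding E_def
      by (rule integral_mono) (use wi w_ge in auto)
    then show ?thesis by (simp add: P.prob_space)
  qed
  have YwE: "(\<integral>\<omega>. Y \<omega> * w (Y \<omega>) \<partial>M) = lam_star * E"
  proof -
    have "(\<integral>\<omega>. Y \<omega> * w (Y \<omega>) \<partial>M) = (\<integral>\<omega>. phi_c c (Y \<omega> - lam_star) + lam_star * w (Y \<omega>) \<partial>M)"
      by (rule Bochner_Integration.integral_cong) (auto simp: phi_w algebra_simps)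
    also have "\<dots> = g + lam_star * E"
      using phii wi by (simp add: g_def E_def)
    finally show ?thesis using g0 by simp
  qed
  define D0 where "D0 = (\<lambda>y. w y / E)"
  have part1: "feasible_D M Y \<alpha> D0 \<and> (\<integral>\<omega>. Y \<omega> * D0 (Y \<omega>) \<partial>M) = lam_star"
  proof (intro conjI)
    show "feasible_D M Y \<alpha> D0"
      unfolding feasible_D_def
    proof (intro conjI allI)
      show "D0 \<in> borel_measurable borel" unfolding D0_def by measurable
      show "0 \<le> D0 r" for r using w_ge[of r] E1 unfolding D0_def by simp
      show "(\<integral>\<omega>. D0 (Y \<omega>) \<partial>M) = 1" using E1 unfolding D0_def by (simp add: E_def)
      show "D0 r1 \<le> exp (2 * \<alpha>) * D0 r2" for r1 r2
      proof -
        have "c * 1 \<le> c * w r2" using w_ge[of r2] c1 by (intro mult_left_mono) auto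
        then have "w r1 \<le> c * w r2" using w_le[of r1] by simp
        then show ?thesis unfolding D0_def c_def[symmetric] using E1
          by (simp add: divide_right_mono)
      qed
    qed
    show "(\<integral>\<omega>. Y \<omega> * D0 (Y \<omega>) \<partial>M) = lam_star"
    proof -
      have "(\<integral>\<omega>. Y \<omega> * D0 (Y \<omega>) \<partial>M) = (\<integral>\<omega>. Y \<omega> * w (Y \<omega>) / E \<partial>M)"
        unfolding D0_def by simp
      also have "\<dots> = (\<integral>\<omega>. Y \<omega> * w (Y \<omega>) \<partial>M) / E" by simp
      finally show ?thesis using YwE E1 by simp
    qed
  qed
  have part2: "(\<integral>\<omega>. Y \<omega> * D (Y \<omega>) \<partial>M) \<ge> lam_star" if fD: "feasible_D M Y \<alpha> D" for D
  proof -
    have Dm[measurable]: "D \<in> borel_measurable borel" and Dnn: "\<And>r. D r \<ge> 0"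
      and D1: "(\<integral>\<omega>. D (Y \<omega>) \<partial>M) = 1" and Dr: "\<And>r1 r2. D r1 \<le> c * D r2"
      using fD unfolding feasible_D_def c_def by auto
    define m where "m = Inf (range D)"
    have bdd: "bdd_below (range D)" by (rule bdd_belowI[where m=0]) (auto intro: Dnn)
    have m_le: "m \<le> D r" for r unfolding m_def by (rule cInf_lower) (use bdd in auto)
    have D_le: "D r \<le> c * m" for r
    proof -
      have "D r / c \<le> m" unfolding m_def
        by (rule cInf_greatest) (use Dr c1 in \<open>auto simp: field_simps mult.commute\<close>)
      then show ?thesis using c1 by (simp add: field_simps)
    qed
    have Di: "integrable M (\<lambda>\<omega>. D (Y \<omega>))"
      using D1 by (rule_tac ccontr) (simp add: not_integrable_integral_eq)
    have YDi: "integrable M (\<lambda>\<omega>. Y \<omega> * D (Y \<omega>))"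
    proof (rule Bochner_Integration.integrable_bound)
      show "integrable M (\<lambda>\<omega>. (c * m) * Y \<omega>)" using Yi by simp
      show "(\<lambda>\<omega>. Y \<omega> * D (Y \<omega>)) \<in> borel_measurable M" by measurable
      show "AE \<omega> in M. norm (Y \<omega> * D (Y \<omega>)) \<le> norm ((c * m) * Y \<omega>)"
      proof (rule AE_I2)
        fix \<omega>
        have "\<bar>D (Y \<omega>)\<bar> \<le> \<bar>c * m\<bar>" using D_le[of "Y \<omega>"] Dnn[of "Y \<omega>"] by simp
        then show "norm (Y \<omega> * D (Y \<omega>)) \<le> norm ((c * m) * Y \<omega>)"
          by (simp add: abs_mult) (metis abs_ge_zero mult.commute mult_left_mono)
      qed
    qed
    have pw: "m * phi_c c (Y \<omega> - lam_star) \<le> (Y \<omega> - lam_star) * D (Y \<omega>)" for \<omega>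
    proof (cases "lam_star \<le> Y \<omega>")
      case True
      then have "phi_c c (Y \<omega> - lam_star) = Y \<omega> - lam_star" using phi_w by (simp add: w_def)
      moreover have "m * (Y \<omega> - lam_star) \<le> D (Y \<omega>) * (Y \<omega> - lam_star)"
        using True m_le[of "Y \<omega>"] by (intro mult_right_mono) auto
      ultimately show ?thesis by (simp add: mult.commute)
    next
      case False
      then have "phi_c c (Y \<omega> - lam_star) = (Y \<omega> - lam_star) * c" using phi_w by (simp add: w_def)
      moreover have "(Y \<omega> - lam_star) * (c * m) \<le> (Y \<omega> - lam_star) * D (Y \<omega>)"
        using False D_le[of "Y \<omega>"] by (intro mult_left_mono_neg) auto
      ultimately show ?thesis by (simp add: ac_simps)
    qed
    have "m * g = (\<integral>\<omega>. m * phi_c c (Y \<omega> - lam_star) \<partial>M)" by (simp add: g_def)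
    also have "\<dots> \<le> (\<integral>\<omega>. (Y \<omega> - lam_star) * D (Y \<omega>) \<partial>M)"
      by (rule integral_mono) (use phii YDi Di pw in \<open>auto simp: left_diff_distrib\<close>)
    also have "\<dots> = (\<integral>\<omega>. Y \<omega> * D (Y \<omega>) \<partial>M) - lam_star"
      using YDi Di D1 by (simp add: left_diff_distrib)
    finally show ?thesis using g0 by simp
  qed
  show ?thesis using part1 part2 by blast
qed

end
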